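(* Let $0\le q\in L_1^{loc}(\mathbb{R})$ and assume there is $a\in(0,\infty)$ with $\inf_{x\in\mathbb{R}}\int_{x-a}^{x+a}q(t)\,dt>0$. For $\lambda\in(0,\infty)$ set $$I_1(x)=\int_x^\infty e^{-\int_x^t(q(\xi)+\lambda)d\xi}dt,\qquad I_2(x)=\int_{-\infty}^x e^{-\int_t^x(q(\xi)+\lambda)d\xi}dt.$$ Then there exist $\delta_1(\lambda)>0$ and $\delta_2(\lambda)>0$ such that $$\sup_{x\in\mathbb{R}}I_1(x)=\frac{1}{\lambda+\delta_1(\lambda)},\qquad\sup_{x\in\mathbb{R}}I_2(x)=\frac{1}{\lambda+\delta_2(\lambda)}.$$ *)

theory Defs
  imports "HOL-Analysis.Analysis"
begin

definition locally_integrable :: "(real \<Rightarrow> real) \<Rightarrow> bool" where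
  "locally_integrable q \<longleftrightarrow> (\<forall>a b. set_integrable lborel {a..b} q)"

definition I1 :: "(real \<Rightarrow> real) \<Rightarrow> real \<Rightarrow> real \<Rightarrow> real" where
  "I1 q l x = (LBINT t:{x..}. exp (- (LBINT \<xi>:{x..t}. (q \<xi> + l))))"

definition I2 :: "(real \<Rightarrow> real) \<Rightarrow> real \<Rightarrow> real \<Rightarrow> real" where
  "I2 q l x = (LBINT t:{..x}. exp (- (LBINT \<xi>:{t..x}. (q \<xi> + l))))"

end

theory Submission
  imports Defs
begin

lemma exp_half:
  fixes l c x :: real
  assumes l: "l > 0"
  shows "set_integrable lborel {c..} (\<lambda>t. exp (-l*(t-x)))"
    and "(LBINT t:{c..}. exp (-l*(t-x))) = exp (-l*(c-x))/l"
proof -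
  have h0: "((\<lambda>t. exp (l*x) * exp (-l*t)) has_integral (exp (l*x) * (exp (-l*c)/l))) {c..}"
    by (rule has_integral_mult_right[OF has_integral_exp_minus_to_infinity[OF l]])
  have eq: "\<And>t. exp (l*x) * exp (-l*t) = exp (-l*(t-x))"
    by (simp add: exp_add[symmetric] algebra_simps)
  have eq2: "exp (l*x) * (exp (-l*c)/l) = exp (-l*(c-x))/l"
    using eq[of c] by simp
  have h: "((\<lambda>t. exp (-l*(t-x))) has_integral exp (-l*(c-x))/l) {c..}"
    using h0 unfolding eq eq2 .
  have "(\<lambda>t. exp (-l*(t-x))) absolutely_integrable_on {c..}"
    using h by (intro nonnegative_absolutely_integrable_1) auto
  then show si: "set_integrable lborel {c..} (\<lambda>t. exp (-l*(t-x)))"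
    unfolding set_integrable_def
    by (subst (asm) integrable_completion) auto
  show "(LBINT t:{c..}. exp (-l*(t-x))) = exp (-l*(c-x))/l"
    using set_borel_integral_eq_integral(2)[OF si] h by (simp add: integral_unique)
qed
lemma sint_nonneg:
  fixes g :: "real \<Rightarrow> real"
  assumes "\<And>t. t \<in> A \<Longrightarrow> g t \<ge> 0"
  shows "(LBINT t:A. g t) \<ge> 0"
  unfolding set_lebesgue_integral_def
  using assms by (intro Bochner_Integration.integral_nonneg) (auto simp: indicator_def)

lemma sint_mono_set:
  fixes g :: "real \<Rightarrow> real"
  assumes "set_integrable lborel B g" "A \<in> sets lborel" "A \<subseteq> B" "\<And>t. t \<in> B \<Longrightarrow> g t \<ge> 0"
  shows "(LBINT t:A. g t) \<le> (LBINT t:B. g t)"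
proof -
  have "set_integrable lborel A g" using set_integrable_subset assms by blast
  then show ?thesis
    using assms unfolding set_lebesgue_integral_def set_integrable_def
    by (intro Bochner_Integration.integral_mono) (auto simp: indicator_def)
qed

lemma sint_pos:
  fixes g :: "real \<Rightarrow> real"
  assumes "set_integrable lborel A g" "A \<in> sets lborel" "emeasure lborel A > 0"
     "\<And>t. t \<in> A \<Longrightarrow> g t > 0"
  shows "(LBINT t:A. g t) > 0"
proof -
  have ge: "(LBINT t:A. g t) \<ge> 0" using assms(4) by (intro sint_nonneg) (auto intro: less_imp_le)
  have "(LBINT t:A. g t) \<noteq> 0"
  proof
    assume z: "(LBINT t:A. g t) = 0"
    have i: "integrable lborel (\<lambda>t. indicator A t * g t)"
      using assms(1) unfolding set_integrable_def by simp
    have z2: "(LBINT t:A. indicator A t * g t) = 0"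
      proof -
      have "(\<lambda>x. indicator A x *\<^sub>R (indicator A x * g x)) = (\<lambda>x. indicator A x *\<^sub>R g x :: real)"
        by (auto simp: indicator_def fun_eq_iff)
      then show ?thesis using z unfolding set_lebesgue_integral_def by simp
    qed
    have "A \<in> null_sets lborel"
      by (rule null_if_pos_func_has_zero_int[OF i assms(2) _ z2]) (use assms(4) in auto)
    then show False using assms(3) by auto
  qed
  then show ?thesis using ge by linarith
qed
lemma exp_half2:
  fixes l c x :: real
  assumes l: "l > 0"
  shows "set_integrable lborel {..c} (\<lambda>t. exp (-l*(x-t)))"
    and "(LBINT t:{..c}. exp (-l*(x-t))) = exp (-l*(x-c))/l"
proof -
  let ?h = "\<lambda>t. indicator {..c} t *\<^sub>R exp (-l*(x-t)) :: real"
  have hm: "?h \<in> borel_measurable borel" by measurable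
  have eqh: "(\<lambda>s. ?h (- s)) = (\<lambda>s. indicator {-c..} s *\<^sub>R exp (-l*(s-(-x))))"
    by (auto simp: fun_eq_iff indicator_def algebra_simps)
  have "integrable lborel ?h \<longleftrightarrow> integrable (distr lborel borel uminus) ?h"
    by (simp add: lborel_distr_uminus)
  also have "\<dots> \<longleftrightarrow> integrable lborel (\<lambda>s. ?h (- s))"
    by (rule integrable_distr_eq) (auto simp: hm)
  finally show si: "set_integrable lborel {..c} (\<lambda>t. exp (-l*(x-t)))"
    unfolding set_integrable_def eqh using exp_half(1)[OF l, of "-c" "-x"]
    unfolding set_integrable_def by simp
  have "integral\<^sup>L lborel ?h = integral\<^sup>L (distr lborel borel uminus) ?h"
    by (simp add: lborel_distr_uminus)
  also have "\<dots> = integral\<^sup>L lborel (\<lambda>s. ?h (- s))"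
    by (rule integral_distr) (auto simp: hm)
  finally show "(LBINT t:{..c}. exp (-l*(x-t))) = exp (-l*(x-c))/l"
    unfolding set_lebesgue_integral_def eqh using exp_half(2)[OF l, of "-c" "-x"]
    unfolding set_lebesgue_integral_def by (simp add: algebra_simps)
qed
lemma I1_bounds:
  fixes q :: "real \<Rightarrow> real" and l a c x :: real
  assumes q_nonneg: "\<And>x. q x \<ge> 0"
    and qi: "\<And>u v. set_integrable lborel {u..v} q"
    and a: "a > 0" and hc: "\<And>y. c \<le> (LBINT t:{y-a..y+a}. q t)"
    and l: "l > 0"
  shows "0 < I1 q l x" "I1 q l x \<le> 1/l - (1 - exp (-c)) * (exp (-l*(2*a))/l)"
proof -
  define F where "F t = (LBINT \<xi>:{x..t}. (q \<xi> + l))" for t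
  have ci: "set_integrable lborel {u..v} (\<lambda>_. l)" for u v :: real
    by (rule borel_integrable_atLeastAtMost') (rule continuous_on_const)
  have qli: "set_integrable lborel {u..v} (\<lambda>\<xi>. q \<xi> + l)" for u v
    using set_integral_add(1)[OF qi ci] .
  have F_eq: "F t = (LBINT \<xi>:{x..t}. q \<xi>) + l*(t-x)" if "x \<le> t" for t
    unfolding F_def using that
    by (simp add: set_integral_add(2)[OF qi ci] set_integral_const measure_lborel_Icc)
  have Q_nn: "(LBINT \<xi>:{u..v}. q \<xi>) \<ge> 0" for u v
    by (rule sint_nonneg) (use q_nonneg in auto)
  have F_mono: "mono F"
  proof (rule monoI)
    fix t1 t2 :: real assume le: "t1 \<le> t2"
    show "F t1 \<le> F t2"
    proof (cases "t1 < x")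
      case True
      then have "F t1 = 0" unfolding F_def by (simp add: set_lebesgue_integral_def del: set_integral_add)
      moreover have "F t2 \<ge> 0" unfolding F_def
        by (rule sint_nonneg) (use q_nonneg l in \<open>auto intro: add_nonneg_nonneg less_imp_le\<close>)
      ultimately show ?thesis by simp
    next
      case False
      show ?thesis unfolding F_def
        by (rule sint_mono_set[OF qli]) (use le q_nonneg l in \<open>auto intro: add_nonneg_nonneg less_imp_le\<close>)
    qed
  qed
  have Fm[measurable]: "F \<in> borel_measurable borel" using borel_measurable_mono[OF F_mono] .
  define f where "f t = exp (- F t)" for t
  have fm[measurable]: "f \<in> borel_measurable borel" unfolding f_def by measurable
  define e where "e t = exp (-l*(t-x))" for t
  have F_lb: "F t \<ge> l*(t-x)" if "x \<le> t" for t
    using F_eq[OF that] Q_nn[of x t] by simp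
  have F_lb2: "F t \<ge> c + l*(t-x)" if "x + 2*a \<le> t" for t
  proof -
    have "c \<le> (LBINT \<xi>:{(x+a)-a..(x+a)+a}. q \<xi>)" by (rule hc)
    also have "\<dots> = (LBINT \<xi>:{x..x+2*a}. q \<xi>)" by (simp add: algebra_simps mult_2)
    also have "\<dots> \<le> (LBINT \<xi>:{x..t}. q \<xi>)"
      by (rule sint_mono_set[OF qi]) (use that q_nonneg in auto)
    finally show ?thesis using F_eq[of t] that a by simp
  qed
  have f_le: "f t \<le> e t" if "x \<le> t" for t
    unfolding f_def e_def using F_lb[OF that] by simp
  have f_le2: "f t \<le> exp (-c) * e t" if "x + 2*a \<le> t" for t
    unfolding f_def e_def using F_lb2[OF that] by (simp add: exp_add[symmetric])
  have f_pos: "f t > 0" for t unfolding f_def by simp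
  have ei: "set_integrable lborel {x..} e" unfolding e_def using exp_half(1)[OF l] .
  have fi: "set_integrable lborel {x..} f"
  proof (rule set_integrable_bound[OF ei])
    show "set_borel_measurable lborel {x..} f"
      unfolding set_borel_measurable_def by measurable
    show "AE t in lborel. t \<in> {x..} \<longrightarrow> norm (f t) \<le> norm (e t)"
      using f_le f_pos by (auto intro!: AE_I2 simp: e_def less_imp_le)
  qed
  have I1eq: "I1 q l x = (LBINT t:{x..}. f t)"
    unfolding I1_def f_def F_def ..
  show "0 < I1 q l x"
    unfolding I1eq
  proof (rule sint_pos[OF fi])
    have "emeasure lborel {x..x+1} \<le> emeasure lborel {x..}"
      by (rule emeasure_mono) auto
    moreover have "emeasure lborel {x..x+1} = 1" by simp
    ultimately show "emeasure lborel {x..} > 0"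
      using order_less_le_trans zero_less_one by metis
  qed (auto intro: f_pos)
  have un: "{x..} = {x..<x+2*a} \<union> {x+2*a..}" using a by auto
  have fi1: "set_integrable lborel {x..<x+2*a} f" by (rule set_integrable_subset[OF fi]) auto
  have fi2: "set_integrable lborel {x+2*a..} f" by (rule set_integrable_subset[OF fi]) (use a in auto)
  have ei1: "set_integrable lborel {x..<x+2*a} e" by (rule set_integrable_subset[OF ei]) auto
  have ei2: "set_integrable lborel {x+2*a..} e" by (rule set_integrable_subset[OF ei]) (use a in auto)
  have fsplit: "(LBINT t:{x..}. f t) = (LBINT t:{x..<x+2*a}. f t) + (LBINT t:{x+2*a..}. f t)"
    unfolding un by (rule set_integral_Un[OF _ fi1 fi2]) auto
  have esplit: "(LBINT t:{x..}. e t) = (LBINT t:{x..<x+2*a}. e t) + (LBINT t:{x+2*a..}. e t)"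
    unfolding un by (rule set_integral_Un[OF _ ei1 ei2]) auto
  have eall: "(LBINT t:{x..}. e t) = 1/l" unfolding e_def using exp_half(2)[OF l, of x x] by simp
  have e2: "(LBINT t:{x+2*a..}. e t) = exp (-l*(2*a))/l" unfolding e_def using exp_half(2)[OF l, of "x+2*a" x] by simp
  have b1: "(LBINT t:{x..<x+2*a}. f t) \<le> (LBINT t:{x..<x+2*a}. e t)"
    by (rule set_integral_mono[OF fi1 ei1]) (auto intro: f_le)
  have b2: "(LBINT t:{x+2*a..}. f t) \<le> (LBINT t:{x+2*a..}. exp (-c) * e t)"
    by (rule set_integral_mono[OF fi2]) (use ei2 f_le2 in auto)
  show "I1 q l x \<le> 1/l - (1 - exp (-c)) * (exp (-l*(2*a))/l)"
  proof -
    define E where "E = exp (-l*(2*a))/l"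
    have b2': "(LBINT t:{x+2*a..}. f t) \<le> exp (-c) * E" using b2 e2 by (simp add: E_def)
    have "I1 q l x \<le> (1/l - E) + exp (-c) * E"
      using b1 b2' fsplit esplit eall e2 unfolding I1eq E_def by linarith
    also have "\<dots> = 1/l - (1 - exp (-c)) * E" by (simp add: algebra_simps)
    finally show ?thesis unfolding E_def .
  qed
qed
lemma I2_bounds:
  fixes q :: "real \<Rightarrow> real" and l a c x :: real
  assumes q_nonneg: "\<And>x. q x \<ge> 0"
    and qi: "\<And>u v. set_integrable lborel {u..v} q"
    and a: "a > 0" and hc: "\<And>y. c \<le> (LBINT t:{y-a..y+a}. q t)"
    and l: "l > 0"
  shows "0 < I2 q l x" "I2 q l x \<le> 1/l - (1 - exp (-c)) * (exp (-l*(2*a))/l)"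
proof -
  define F where "F t = (LBINT \<xi>:{t..x}. (q \<xi> + l))" for t
  have ci: "set_integrable lborel {u..v} (\<lambda>_. l)" for u v :: real
    by (rule borel_integrable_atLeastAtMost') (rule continuous_on_const)
  have qli: "set_integrable lborel {u..v} (\<lambda>\<xi>. q \<xi> + l)" for u v
    using set_integral_add(1)[OF qi ci] .
  have F_eq: "F t = (LBINT \<xi>:{t..x}. q \<xi>) + l*(x-t)" if "t \<le> x" for t
    unfolding F_def using that
    by (simp add: set_integral_add(2)[OF qi ci] set_integral_const measure_lborel_Icc)
  have Q_nn: "(LBINT \<xi>:{u..v}. q \<xi>) \<ge> 0" for u v
    by (rule sint_nonneg) (use q_nonneg in auto)
  have F_mono: "mono (\<lambda>t. - F t)"
  proof (rule monoI)
    fix t1 t2 :: real assume le: "t1 \<le> t2"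
    show "- F t1 \<le> - F t2"
    proof (cases "x < t2")
      case True
      then have "F t2 = 0" unfolding F_def by (simp add: set_lebesgue_integral_def del: set_integral_add)
      moreover have "F t1 \<ge> 0" unfolding F_def
        by (rule sint_nonneg) (use q_nonneg l in \<open>auto intro: add_nonneg_nonneg less_imp_le\<close>)
      ultimately show ?thesis by simp
    next
      case False
      have "F t2 \<le> F t1" unfolding F_def
        by (rule sint_mono_set[OF qli]) (use le q_nonneg l in \<open>auto intro: add_nonneg_nonneg less_imp_le\<close>)
      then show ?thesis by simp
    qed
  qed
  have Gm: "(\<lambda>t. - F t) \<in> borel_measurable borel" using borel_measurable_mono[OF F_mono] .
  have Fm[measurable]: "F \<in> borel_measurable borel"
    using borel_measurable_uminus[OF Gm] by simp
  define f where "f t = exp (- F t)" for t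
  have fm[measurable]: "f \<in> borel_measurable borel" unfolding f_def by measurable
  define e where "e t = exp (-l*(x-t))" for t
  have F_lb: "F t \<ge> l*(x-t)" if "t \<le> x" for t
    using F_eq[OF that] Q_nn[of t x] by simp
  have F_lb2: "F t \<ge> c + l*(x-t)" if "t \<le> x - 2*a" for t
  proof -
    have "c \<le> (LBINT \<xi>:{(x-a)-a..(x-a)+a}. q \<xi>)" by (rule hc)
    also have "\<dots> = (LBINT \<xi>:{x-2*a..x}. q \<xi>)" by (simp add: algebra_simps mult_2)
    also have "\<dots> \<le> (LBINT \<xi>:{t..x}. q \<xi>)"
      by (rule sint_mono_set[OF qi]) (use that q_nonneg in auto)
    finally show ?thesis using F_eq[of t] that a by simp
  qed
  have f_le: "f t \<le> e t" if "t \<le> x" for t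
    unfolding f_def e_def using F_lb[OF that] by simp
  have f_le2: "f t \<le> exp (-c) * e t" if "t \<le> x - 2*a" for t
    unfolding f_def e_def using F_lb2[OF that] by (simp add: exp_add[symmetric])
  have f_pos: "f t > 0" for t unfolding f_def by simp
  have ei: "set_integrable lborel {..x} e" unfolding e_def using exp_half2(1)[OF l] .
  have fi: "set_integrable lborel {..x} f"
  proof (rule set_integrable_bound[OF ei])
    show "set_borel_measurable lborel {..x} f"
      unfolding set_borel_measurable_def by measurable
    show "AE t in lborel. t \<in> {..x} \<longrightarrow> norm (f t) \<le> norm (e t)"
      using f_le f_pos by (auto intro!: AE_I2 simp: e_def less_imp_le)
  qed
  have I2eq: "I2 q l x = (LBINT t:{..x}. f t)"
    unfolding I2_def f_def F_def ..
  show "0 < I2 q l x"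
    unfolding I2eq
  proof (rule sint_pos[OF fi])
    have "emeasure lborel {x-1..x} \<le> emeasure lborel {..x}"
      by (rule emeasure_mono) auto
    moreover have "emeasure lborel {x-1..x} = 1" by simp
    ultimately show "emeasure lborel {..x} > 0"
      using order_less_le_trans zero_less_one by metis
  qed (auto intro: f_pos)
  have un: "{..x} = {..x-2*a} \<union> {x-2*a<..x}" using a by auto
  have fi1: "set_integrable lborel {..x-2*a} f" by (rule set_integrable_subset[OF fi]) (use a in auto)
  have fi2: "set_integrable lborel {x-2*a<..x} f" by (rule set_integrable_subset[OF fi]) auto
  have ei1: "set_integrable lborel {..x-2*a} e" by (rule set_integrable_subset[OF ei]) (use a in auto)
  have ei2: "set_integrable lborel {x-2*a<..x} e" by (rule set_integrable_subset[OF ei]) auto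
  have fsplit: "(LBINT t:{..x}. f t) = (LBINT t:{..x-2*a}. f t) + (LBINT t:{x-2*a<..x}. f t)"
    unfolding un by (rule set_integral_Un[OF _ fi1 fi2]) auto
  have esplit: "(LBINT t:{..x}. e t) = (LBINT t:{..x-2*a}. e t) + (LBINT t:{x-2*a<..x}. e t)"
    unfolding un by (rule set_integral_Un[OF _ ei1 ei2]) auto
  have eall: "(LBINT t:{..x}. e t) = 1/l" unfolding e_def using exp_half2(2)[OF l, of x x] by simp
  have e2: "(LBINT t:{..x-2*a}. e t) = exp (-l*(2*a))/l" unfolding e_def using exp_half2(2)[OF l, of "x-2*a" x] by simp
  have b1: "(LBINT t:{x-2*a<..x}. f t) \<le> (LBINT t:{x-2*a<..x}. e t)"
    by (rule set_integral_mono[OF fi2 ei2]) (auto intro: f_le)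
  have b2: "(LBINT t:{..x-2*a}. f t) \<le> (LBINT t:{..x-2*a}. exp (-c) * e t)"
    by (rule set_integral_mono[OF fi1]) (use ei1 f_le2 in auto)
  show "I2 q l x \<le> 1/l - (1 - exp (-c)) * (exp (-l*(2*a))/l)"
  proof -
    define E where "E = exp (-l*(2*a))/l"
    have b2': "(LBINT t:{..x-2*a}. f t) \<le> exp (-c) * E" using b2 e2 by (simp add: E_def)
    have "I2 q l x \<le> (1/l - E) + exp (-c) * E"
      using b1 b2' fsplit esplit eall e2 unfolding I2eq E_def by linarith
    also have "\<dots> = 1/l - (1 - exp (-c)) * E" by (simp add: algebra_simps)
    finally show ?thesis unfolding E_def .
  qed
qed

lemma sup_form:
  fixes g :: "real \<Rightarrow> real" and l K :: real
  assumes l: "l > 0" and pos: "\<And>x. 0 < g x" and ub: "\<And>x. g x \<le> K" and K: "K < 1/l"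
  shows "\<exists>\<delta>>0. (SUP x. g x) = 1 / (l + \<delta>)"
proof -
  define S where "S = (SUP x. g x)"
  have bdd: "bdd_above (range g)" using ub by (meson bdd_aboveI2)
  have "g 0 \<le> S" unfolding S_def by (rule cSUP_upper[OF _ bdd]) auto
  then have Sp: "S > 0" using pos[of 0] by linarith
  have "S \<le> K" unfolding S_def by (rule cSUP_least) (auto intro: ub)
  then have Sl: "S < 1/l" using K by linarith
  have "l < 1/S" using Sl Sp l by (simp add: field_simps)
  then have "1/S - l > 0" by simp
  moreover have "S = 1 / (l + (1/S - l))" using Sp by simp
  ultimately show ?thesis unfolding S_def by blast
qed

theorem lemma6p1:
  fixes q :: "real \<Rightarrow> real" and l :: real
  assumes q_nonneg: "\<And>x. q x \<ge> 0"
    and q_loc: "locally_integrable q"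
    and a_ex: "\<exists>a>0. (INF x. (LBINT t:{x-a..x+a}. q t)) > 0"
    and lam: "l > 0"
  shows "\<exists>\<delta>1>0. \<exists>\<delta>2>0.
           (SUP x. I1 q l x) = 1 / (l + \<delta>1) \<and>
           (SUP x. I2 q l x) = 1 / (l + \<delta>2)"
proof -
  obtain a where a: "a > 0" and ip: "(INF x. (LBINT t:{x-a..x+a}. q t)) > 0"
    using a_ex by blast
  define c where "c = (INF x. (LBINT t:{x-a..x+a}. q t))"
  have qi: "\<And>u v. set_integrable lborel {u..v} q"
    using q_loc unfolding locally_integrable_def by blast
  have bdd: "bdd_below (range (\<lambda>x. (LBINT t:{x-a..x+a}. q t)))"
    using sint_nonneg[of "{_ - a.._ + a}" q] q_nonneg by (meson bdd_belowI2)
  have hc: "\<And>y. c \<le> (LBINT t:{y-a..y+a}. q t)"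
    unfolding c_def by (rule cINF_lower[OF bdd]) auto
  have cpos: "c > 0" using ip c_def by simp
  define K where "K = 1/l - (1 - exp (-c)) * (exp (-l*(2*a))/l)"
  have "(1 - exp (-c)) * (exp (-l*(2*a))/l) > 0"
    using cpos lam by (intro mult_pos_pos divide_pos_pos) auto
  then have K: "K < 1/l" unfolding K_def by linarith
  have u1: "\<And>x. I1 q l x \<le> K" unfolding K_def by (rule I1_bounds(2)[OF q_nonneg qi a hc lam])
  have u2: "\<And>x. I2 q l x \<le> K" unfolding K_def by (rule I2_bounds(2)[OF q_nonneg qi a hc lam])
  have p1: "\<And>x. 0 < I1 q l x" by (rule I1_bounds(1)[OF q_nonneg qi a hc lam])
  have p2: "\<And>x. 0 < I2 q l x" by (rule I2_bounds(1)[OF q_nonneg qi a hc lam])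
  have e1: "\<exists>\<delta>>0. (SUP x. I1 q l x) = 1 / (l + \<delta>)" by (rule sup_form[OF lam p1 u1 K])
  have e2: "\<exists>\<delta>>0. (SUP x. I2 q l x) = 1 / (l + \<delta>)" by (rule sup_form[OF lam p2 u2 K])
  from e1 e2 show ?thesis by blast
qed

end
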